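(* For $\theta\in(0,2\pi]$ let $$a(\theta)=2\frac{1-\cos\theta}{\theta^2}-\frac{\sin\theta}{2\theta},\qquad b(\theta)=\frac{1-\cos\theta}{\theta^4}-\frac{\sin\theta}{2\theta^3},$$ and $a(0)=1/2$, $b(0)=1/24$. Then (i) $a$ and $b$ are strictly decreasing and strictly positive on $(0,2\pi)$, with $\frac12=a(0)>a(\theta)>a(2\pi)=0$ and $\frac1{24}=b(0)>b(\theta)>b(2\pi)=0$ for $\theta\in(0,2\pi)$; (ii) $a(\theta)/b(\theta)$ is strictly increasing on $[0,2\pi)$, and $\sup_{0<\theta<2\pi}a(\theta)/b(\theta)=\lim_{\theta\to2\pi-}a(\theta)/b(\theta)=4\pi^2$. *)

theory Defs
  imports "HOL-Analysis.Analysis"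
begin

definition afun :: "real \<Rightarrow> real" where
  "afun \<theta> = (if \<theta> = 0 then 1/2
     else 2 * (1 - cos \<theta>) / \<theta>^2 - sin \<theta> / (2 * \<theta>))"

definition bfun :: "real \<Rightarrow> real" where
  "bfun \<theta> = (if \<theta> = 0 then 1/24
     else (1 - cos \<theta>) / \<theta>^4 - sin \<theta> / (2 * \<theta>^3))"

end

theory Submission imports Defs "HOL-Real_Asymp.Real_Asymp" begin

definition uu :: "real \<Rightarrow> real" where "uu t = sin t - t * cos t"
definition ww :: "real \<Rightarrow> real" where "ww t = t^2 * sin t - 3 * sin t + 3 * t * cos t"
definition NN :: "real \<Rightarrow> real" where
  "NN x = 5/2 * x * sin x - 4 * (1 - cos x) - x^2 * cos x / 2"
definition AA :: "real \<Rightarrow> real" where "AA x = 2 * (1 - cos x) / x^2 - sin x / (2 * x)"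
definition BB :: "real \<Rightarrow> real" where "BB x = (1 - cos x) / x^4 - sin x / (2 * x^3)"

lemma uu_pos: assumes "0 < t" "t < pi" shows "uu t > 0"
proof -
  have "uu 0 < uu t"
  proof (rule DERIV_pos_imp_increasing_open[OF assms(1)])
    fix x assume x: "0 < x" "x < t"
    have "(uu has_real_derivative x * sin x) (at x)"
      unfolding uu_def by (auto intro!: derivative_eq_intros simp: algebra_simps)
    moreover have "x * sin x > 0" using x assms by (simp add: sin_gt_zero)
    ultimately show "\<exists>y. (uu has_real_derivative y) (at x) \<and> 0 < y" by blast
  next
    show "continuous_on {0..t} uu" unfolding uu_def by (intro continuous_intros)
  qed
  thus ?thesis by (simp add: uu_def)
qed

lemma ww_neg: assumes "0 < t" "t < pi" shows "ww t < 0"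
proof -
  have "ww t < ww 0"
  proof (rule DERIV_neg_imp_decreasing_open[OF assms(1)])
    fix x assume x: "0 < x" "x < t"
    have "(ww has_real_derivative - x * uu x) (at x)"
      unfolding ww_def uu_def by (auto intro!: derivative_eq_intros simp: algebra_simps power2_eq_square)
    moreover have "- x * uu x < 0" using x assms uu_pos[of x] by simp
    ultimately show "\<exists>y. (ww has_real_derivative y) (at x) \<and> y < 0" by blast
  next
    show "continuous_on {0..t} ww" unfolding ww_def by (intro continuous_intros)
  qed
  thus ?thesis by (simp add: ww_def)
qed

lemma NN_eq: "NN (2*t) = 2 * (sin t * ww t - (uu t)^2)"
proof -
  have s: "sin (2*t) = 2 * sin t * cos t" by (rule sin_double)
  have c: "cos (2*t) = 1 - 2 * (sin t)^2" by (rule cos_double_sin)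
  have c2: "cos (2*t) = (cos t)^2 - (sin t)^2" by (rule cos_double)
  have "NN (2*t) = 5 * t * sin (2*t) - 4 * (1 - cos (2*t)) - 2 * t^2 * cos (2*t)"
    by (simp add: NN_def power2_eq_square)
  also have "\<dots> = 5 * t * (2 * sin t * cos t) - 4 * (1 - (1 - 2 * (sin t)^2)) - 2 * t^2 * ((cos t)^2 - (sin t)^2)"
    using s c c2 by metis
  also have "\<dots> = 2 * (sin t * ww t - (uu t)^2)"
    by (simp add: ww_def uu_def algebra_simps power2_eq_square)
  finally show ?thesis .
qed

lemma NN_neg: assumes "0 < x" "x < 2*pi" shows "NN x < 0"
proof -
  define t where "t = x/2"
  have t: "0 < t" "t < pi" using assms by (auto simp: t_def)
  have x: "x = 2*t" by (simp add: t_def)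
  have "sin t > 0" using t by (simp add: sin_gt_zero)
  moreover have "ww t < 0" using ww_neg t by simp
  moreover have "uu t > 0" using uu_pos t by simp
  ultimately have "sin t * ww t - (uu t)^2 < 0"
    by (smt (verit) mult_pos_neg zero_less_power)
  thus ?thesis unfolding x NN_eq by simp
qed

lemma AA_deriv: assumes "x \<noteq> 0" shows "(AA has_real_derivative NN x / x^3) (at x)"
proof -
  have "(AA has_real_derivative (2 * sin x * x^2 - 2 * (1 - cos x) * (2 * x)) / (x^2)^2
      - (cos x * (2*x) - sin x * 2) / (2*x)^2) (at x)"
    unfolding AA_def using assms
    by (auto intro!: derivative_eq_intros simp: power2_eq_square)
  moreover have "(2 * sin x * x^2 - 2 * (1 - cos x) * (2 * x)) / (x^2)^2
      - (cos x * (2*x) - sin x * 2) / (2*x)^2 = NN x / x^3"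
    using assms by (simp add: NN_def field_simps power2_eq_square power3_eq_cube)
  ultimately show ?thesis by simp
qed

lemma BB_deriv: assumes "x \<noteq> 0" shows "(BB has_real_derivative NN x / x^5) (at x)"
proof -
  have "(BB has_real_derivative (sin x * x^4 - (1 - cos x) * (4 * x^3)) / (x^4)^2
      - (cos x * (2*x^3) - sin x * (2 * (3 * x^2))) / (2*x^3)^2) (at x)"
    unfolding BB_def using assms
    by (auto intro!: derivative_eq_intros)
  moreover have "(sin x * x^4 - (1 - cos x) * (4 * x^3)) / (x^4)^2
      - (cos x * (2*x^3) - sin x * (2 * (3 * x^2))) / (2*x^3)^2 = NN x / x^5"
    using assms by (simp add: NN_def field_simps) (simp add: algebra_simps eval_nat_numeral)
  ultimately show ?thesis by simp
qed

lemma cont_AB: assumes "0 \<notin> S" shows "continuous_on S AA" "continuous_on S BB"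
  using assms unfolding AA_def BB_def by (auto intro!: continuous_intros)

lemma AB_half: assumes "t \<noteq> 0"
  shows "AA (2*t) = (sin t / (2*t^2)) * (sin t + uu t)" "BB (2*t) = sin t * uu t / (8 * t^4)"
proof -
  have s: "sin (2*t) = 2 * sin t * cos t" by (rule sin_double)
  have c: "cos (2*t) = 1 - 2 * (sin t)^2" by (rule cos_double_sin)
  show "AA (2*t) = (sin t / (2*t^2)) * (sin t + uu t)"
    unfolding AA_def s c uu_def using assms by (simp add: field_simps power2_eq_square)
  show "BB (2*t) = sin t * uu t / (8 * t^4)"
    unfolding BB_def s c uu_def using assms by (simp add: field_simps power2_eq_square eval_nat_numeral)
qed

lemma AB_pos: assumes "0 < x" "x < 2*pi" shows "AA x > 0" "BB x > 0"
proof -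
  define t where "t = x/2"
  have t: "0 < t" "t < pi" using assms by (auto simp: t_def)
  have x: "x = 2*t" by (simp add: t_def)
  have "sin t > 0" using t by (simp add: sin_gt_zero)
  moreover have "uu t > 0" using uu_pos t by simp
  ultimately show "AA x > 0" "BB x > 0" unfolding x using AB_half[of t] t by auto
qed

lemma AA_mono: assumes "0 < x" "x < y" "y < 2*pi" shows "AA y < AA x"
proof (rule DERIV_neg_imp_decreasing_open[OF assms(2)])
  fix z assume z: "x < z" "z < y"
  have "NN z / z^3 < 0" using NN_neg[of z] z assms by (simp add: divide_neg_pos)
  thus "\<exists>d. (AA has_real_derivative d) (at z) \<and> d < 0" using AA_deriv[of z] z assms by auto
next
  show "continuous_on {x..y} AA" by (rule cont_AB) (use assms in auto)
qed

lemma BB_mono: assumes "0 < x" "x < y" "y < 2*pi" shows "BB y < BB x"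
proof (rule DERIV_neg_imp_decreasing_open[OF assms(2)])
  fix z assume z: "x < z" "z < y"
  have "NN z / z^5 < 0" using NN_neg[of z] z assms by (simp add: divide_neg_pos)
  thus "\<exists>d. (BB has_real_derivative d) (at z) \<and> d < 0" using BB_deriv[of z] z assms by auto
next
  show "continuous_on {x..y} BB" by (rule cont_AB) (use assms in auto)
qed

lemma cos_lt1: assumes "0 < x" "x < 2*pi" shows "cos x < 1"
proof -
  have "sin (x/2) > 0" using assms by (intro sin_gt_zero) auto
  moreover have "cos x = 1 - 2 * (sin (x/2))^2" using cos_double_sin[of "x/2"] by simp
  ultimately show ?thesis by simp
qed

lemma R_mono: assumes "0 < x" "x < y" "y < 2*pi" shows "AA x / BB x < AA y / BB y"
proof (rule DERIV_pos_imp_increasing_open[OF assms(2)])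
  fix z assume z: "x < z" "z < y"
  have z0: "0 < z" "z < 2*pi" using z assms by auto
  have Bz: "BB z > 0" using AB_pos z0 by auto
  have d: "((\<lambda>x. AA x / BB x) has_real_derivative
     (NN z / z^3 * BB z - AA z * (NN z / z^5)) / (BB z * BB z)) (at z)"
    by (rule DERIV_divide[OF AA_deriv BB_deriv]) (use z0 Bz in auto)
  have e: "NN z / z^3 * BB z - AA z * (NN z / z^5) = - (NN z / z^5) * ((1 - cos z) / z^2)"
    using z0 by (simp add: AA_def BB_def field_simps) (simp add: algebra_simps eval_nat_numeral)
  have "- (NN z / z^5) * ((1 - cos z) / z^2) > 0"
    using NN_neg[OF z0] cos_lt1[OF z0] z0 by (intro mult_pos_pos) (auto simp: divide_neg_pos)
  hence "NN z / z^3 * BB z - AA z * (NN z / z^5) > 0" using e by simp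
  hence "(NN z / z^3 * BB z - AA z * (NN z / z^5)) / (BB z * BB z) > 0" using Bz
    by (intro divide_pos_pos mult_pos_pos)
  thus "\<exists>d. ((\<lambda>x. AA x / BB x) has_real_derivative d) (at z) \<and> 0 < d" using d by blast
next
  have "continuous_on {x..y} AA" "continuous_on {x..y} BB" by (rule cont_AB; use assms in auto)+
  moreover have "\<forall>z\<in>{x..y}. BB z \<noteq> 0"
  proof
    fix z assume "z \<in> {x..y}" thus "BB z \<noteq> 0" using AB_pos(2)[of z] assms by auto
  qed
  ultimately show "continuous_on {x..y} (\<lambda>x. AA x / BB x)" by (intro continuous_intros)
qed

lemma AA_lim0: "(AA \<longlongrightarrow> 1/2) (at_right 0)" unfolding AA_def by real_asymp
lemma BB_lim0: "(BB \<longlongrightarrow> 1/24) (at_right 0)" unfolding BB_def by real_asymp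

lemma R_lim0: "((\<lambda>x. AA x / BB x) \<longlongrightarrow> 12) (at_right 0)"
proof -
  have "((\<lambda>x. AA x / BB x) \<longlongrightarrow> (1/2) / (1/24)) (at_right 0)"
    by (intro tendsto_divide AA_lim0 BB_lim0) auto
  thus ?thesis by simp
qed

lemma R_lim2pi: "((\<lambda>x. AA x / BB x) \<longlongrightarrow> 4 * pi^2) (at_left (2*pi))"
proof -
  let ?g = "\<lambda>x. x^2 + x^2 * sin (x/2) / uu (x/2)"
  have "uu pi = pi" by (simp add: uu_def)
  hence "isCont ?g (2*pi)" unfolding uu_def by (intro continuous_intros) auto
  hence "(?g \<longlongrightarrow> ?g (2*pi)) (at_left (2*pi))"
    by (simp add: isCont_def filterlim_at_split)
  moreover have "?g (2*pi) = 4 * pi^2" by (simp add: power2_eq_square)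
  moreover have "eventually (\<lambda>x. ?g x = AA x / BB x) (at_left (2*pi))"
    unfolding eventually_at_left_field
  proof (intro exI[of _ 0] conjI allI impI)
    fix x assume x: "0 < x" "x < 2*pi"
    define t where "t = x/2"
    have t: "0 < t" "t < pi" using x by (auto simp: t_def)
    have xt: "x = 2*t" by (simp add: t_def)
    have "sin t > 0" using t by (simp add: sin_gt_zero)
    moreover have "uu t > 0" using uu_pos t by simp
    moreover have t0: "t \<noteq> 0" using t by simp
    ultimately show "?g x = AA x / BB x" unfolding xt AB_half[OF t0] using t
      by (simp add: field_simps power2_eq_square eval_nat_numeral)
  qed simp
  ultimately show ?thesis by (auto intro: Lim_transform_eventually)
qed

lemma dec_bound:
  fixes f :: "real \<Rightarrow> real"
  assumes mono: "\<And>x y. 0 < x \<Longrightarrow> x < y \<Longrightarrow> y < 2*pi \<Longrightarrow> f y < f x"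
    and lim: "(f \<longlongrightarrow> L) (at_right 0)" and x: "0 < x" "x < 2*pi"
  shows "f x < L"
proof -
  have "f x < f (x/2)" using mono[of "x/2" x] x by auto
  moreover have "f (x/2) \<le> L"
  proof (rule tendsto_lowerbound[OF lim])
    show "eventually (\<lambda>w. f (x/2) \<le> f w) (at_right 0)"
      unfolding eventually_at_right_field
      by (rule exI[of _ "x/2"]) (use x mono in \<open>auto intro: less_imp_le\<close>)
  qed simp
  ultimately show ?thesis by simp
qed

lemma R_upper: assumes x: "0 < x" "x < 2*pi" shows "AA x / BB x < 4 * pi^2"
proof -
  define z where "z = (x + 2*pi)/2"
  have z: "x < z" "z < 2*pi" using x by (auto simp: z_def)
  have "AA x / BB x < AA z / BB z" using R_mono[of x z] x z by auto
  moreover have "AA z / BB z \<le> 4 * pi^2"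
  proof (rule tendsto_lowerbound[OF R_lim2pi])
    show "eventually (\<lambda>w. AA z / BB z \<le> AA w / BB w) (at_left (2*pi))"
      unfolding eventually_at_left_field
      by (rule exI[of _ z]) (use x z R_mono in \<open>auto intro: less_imp_le\<close>)
  qed simp
  ultimately show ?thesis by simp
qed

lemma afun_AA: "x \<noteq> 0 \<Longrightarrow> afun x = AA x" by (simp add: afun_def AA_def)
lemma bfun_BB: "x \<noteq> 0 \<Longrightarrow> bfun x = BB x" by (simp add: bfun_def BB_def)

theorem lemma2:
  shows "(\<forall>x\<in>{0<..<2*pi}. \<forall>y\<in>{0<..<2*pi}. x < y \<longrightarrow> afun y < afun x)
       \<and> (\<forall>x\<in>{0<..<2*pi}. \<forall>y\<in>{0<..<2*pi}. x < y \<longrightarrow> bfun y < bfun x)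
       \<and> (\<forall>\<theta>\<in>{0<..<2*pi}. afun \<theta> > 0 \<and> bfun \<theta> > 0)
       \<and> afun 0 = 1/2 \<and> afun (2*pi) = 0 \<and> bfun 0 = 1/24 \<and> bfun (2*pi) = 0
       \<and> (\<forall>\<theta>\<in>{0<..<2*pi}. afun 0 > afun \<theta> \<and> afun \<theta> > afun (2*pi))
       \<and> (\<forall>\<theta>\<in>{0<..<2*pi}. bfun 0 > bfun \<theta> \<and> bfun \<theta> > bfun (2*pi))
       \<and> (\<forall>x\<in>{0..<2*pi}. \<forall>y\<in>{0..<2*pi}. x < y \<longrightarrow> afun x / bfun x < afun y / bfun y)
       \<and> (SUP \<theta>\<in>{0<..<2*pi}. afun \<theta> / bfun \<theta>) = 4 * pi^2
       \<and> ((\<lambda>\<theta>. afun \<theta> / bfun \<theta>) \<longlongrightarrow> 4 * pi^2) (at_left (2*pi))"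
proof -
  have a0: "afun 0 = 1/2" and b0: "bfun 0 = 1/24" by (simp_all add: afun_def bfun_def)
  have a2: "afun (2*pi) = 0" and b2: "bfun (2*pi) = 0" by (simp_all add: afun_def bfun_def)
  have P1: "\<forall>x\<in>{0<..<2*pi}. \<forall>y\<in>{0<..<2*pi}. x < y \<longrightarrow> afun y < afun x"
    using AA_mono by (auto simp: afun_AA)
  have P2: "\<forall>x\<in>{0<..<2*pi}. \<forall>y\<in>{0<..<2*pi}. x < y \<longrightarrow> bfun y < bfun x"
    using BB_mono by (auto simp: bfun_BB)
  have P3: "\<forall>\<theta>\<in>{0<..<2*pi}. afun \<theta> > 0 \<and> bfun \<theta> > 0"
    using AB_pos by (auto simp: afun_AA bfun_BB)
  have P4: "\<forall>\<theta>\<in>{0<..<2*pi}. afun 0 > afun \<theta> \<and> afun \<theta> > afun (2*pi)"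
  proof
    fix t assume t: "t \<in> {0<..<2*pi}"
    have "AA t < 1/2" by (rule dec_bound[OF _ AA_lim0]) (use AA_mono t in auto)
    thus "afun 0 > afun t \<and> afun t > afun (2*pi)" using t P3 a0 a2 by (auto simp: afun_AA)
  qed
  have P5: "\<forall>\<theta>\<in>{0<..<2*pi}. bfun 0 > bfun \<theta> \<and> bfun \<theta> > bfun (2*pi)"
  proof
    fix t assume t: "t \<in> {0<..<2*pi}"
    have "BB t < 1/24" by (rule dec_bound[OF _ BB_lim0]) (use BB_mono t in auto)
    thus "bfun 0 > bfun t \<and> bfun t > bfun (2*pi)" using t P3 b0 b2 by (auto simp: bfun_BB)
  qed
  have R12: "AA t / BB t > 12" if t: "0 < t" "t < 2*pi" for t
  proof -
    have "- (AA t / BB t) < - 12"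
      by (rule dec_bound[where f="\<lambda>x. - (AA x / BB x)", OF _ tendsto_minus[OF R_lim0]])
         (use R_mono t in auto)
    thus ?thesis by simp
  qed
  have P6: "\<forall>x\<in>{0..<2*pi}. \<forall>y\<in>{0..<2*pi}. x < y \<longrightarrow> afun x / bfun x < afun y / bfun y"
  proof (intro ballI impI)
    fix x y assume x: "x \<in> {0..<2*pi}" and y: "y \<in> {0..<2*pi}" and xy: "x < y"
    show "afun x / bfun x < afun y / bfun y"
    proof (cases "x = 0")
      case True
      thus ?thesis using R12[of y] y xy by (simp add: a0 b0 afun_AA bfun_BB)
    next
      case False
      thus ?thesis using R_mono[of x y] x y xy by (simp add: afun_AA bfun_BB)
    qed
  qed
  have Lim: "((\<lambda>\<theta>. afun \<theta> / bfun \<theta>) \<longlongrightarrow> 4 * pi^2) (at_left (2*pi))"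
  proof (rule Lim_transform_eventually[OF R_lim2pi])
    show "eventually (\<lambda>x. AA x / BB x = afun x / bfun x) (at_left (2*pi))"
      unfolding eventually_at_left_field
      by (rule exI[of _ 0]) (auto simp: afun_AA bfun_BB)
  qed
  have ub: "\<forall>t\<in>{0<..<2*pi}. afun t / bfun t \<le> 4 * pi^2"
    using R_upper by (auto simp: afun_AA bfun_BB intro: less_imp_le)
  have Sup: "(SUP \<theta>\<in>{0<..<2*pi}. afun \<theta> / bfun \<theta>) = 4 * pi^2"
  proof (rule antisym)
    show "(SUP \<theta>\<in>{0<..<2*pi}. afun \<theta> / bfun \<theta>) \<le> 4 * pi^2"
      by (rule cSUP_least) (use ub pi_gt_zero in \<open>auto simp: not_le[symmetric]\<close>)
    have bdd: "bdd_above ((\<lambda>\<theta>. afun \<theta> / bfun \<theta>) ` {0<..<2*pi})"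
      using ub by (auto intro: bdd_aboveI2)
    show "4 * pi^2 \<le> (SUP \<theta>\<in>{0<..<2*pi}. afun \<theta> / bfun \<theta>)"
    proof (rule tendsto_upperbound[OF Lim])
      show "eventually (\<lambda>x. afun x / bfun x \<le> (SUP \<theta>\<in>{0<..<2*pi}. afun \<theta> / bfun \<theta>)) (at_left (2*pi))"
        unfolding eventually_at_left_field
        by (rule exI[of _ 0]) (auto intro: cSUP_upper[OF _ bdd])
    qed simp
  qed
  show ?thesis using P1 P2 P3 a0 a2 b0 b2 P4 P5 P6 Sup Lim by blast
qed

end
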